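(* In $\mathrm{PSym}$, for every parking function $f$ of positive degree, $$\Delta_+(M_f)=\sum_{i\in\mathrm{GD}(f)}M_{{}^if}\otimes M_{f^i}.$$
   Context: $\mathrm{PBT}_n$: planar binary trees with $n+1$ leaves, numbered left to right; $\mathrm{Des}(t)=\{1\le i\le n-1:\text{the }(i+1)\text{-st leaf is a right child}\}$. For $\sigma\in S_n$, $\mathrm{Des}(\sigma)=\{i:\sigma(i)>\sigma(i+1)\}$, $\mathrm{Inv}(\sigma)=\{(i,j):i<j,\sigma(i)>\sigma(j)\}$. A parking function of degree $n$ is a pair $(\sigma,t)\in S_n\times\mathrm{PBT}_n$ with $\mathrm{Des}(t)\subseteq\mathrm{Des}(\sigma)$. Weak order $\sigma\le_w\tau$ iff $\mathrm{Inv}(\sigma)\subseteq\mathrm{Inv}(\tau)$; Tamari order $\le_T$: reflexive–transitive closure of replacing a subtree $x(A,y(B,C))$ by $x(y(A,B),C)$. Parking order: $(\sigma,s)\le_P(\tau,t)$ iff $\sigma\le_w\tau$ and $s\le_T t$. Splitting of binary trees: for $0\le i\le n$, with $P$ the path from the root to leaf $i+1$, ${}^it$ (resp. $t^i$) is obtained by deleting at each node of $P$ the child strictly to the right (resp. left) of the path with its subtree and contracting nodes with one child. For $f=(\sigma,t)$, ${}^if=(\mathrm{std}(\sigma(1)\cdots\sigma(i)),{}^it)$, $f^i=(\mathrm{std}(\sigma(i+1)\cdots\sigma(n)),t^i)$, where $\mathrm{std}$ replaces distinct letters by $1,2,\dots$ preserving relative order. $\mathrm{PSym}$ has basis $\{F_f\}$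 over parking functions with coproduct $\Delta(F_f)=\sum_{i=0}^nF_{{}^if}\otimes F_{f^i}$ and $\Delta_+(x)=\Delta(x)-x\otimes1-1\otimes x$ ($1$ = the degree-0 parking function). The monomial basis is defined by $F_f=\sum_{g\ge_P f}M_g$. Global descents: for $\sigma\in S_n$, $\mathrm{GD}(\sigma)=\{i\in[n-1]:\sigma(a)>\sigma(b)\text{ for all }a\le i<b\}$; for $t\in\mathrm{PBT}_n$, $\mathrm{GD}(t)=\{i\in[n-1]: t=s/r,\ \deg s=i\}$ where $s/r$ identifies the root of $s$ with the leftmost leaf of $r$; for $f=(\sigma,t)$, $\mathrm{GD}(f)=\mathrm{GD}(\sigma)\cap\mathrm{GD}(t)$. *)

theory Defs
  imports Main
begin

datatype bt = Leaf | Node bt bt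

fun deg :: "bt \<Rightarrow> nat" where
  "deg Leaf = 0"
| "deg (Node l r) = Suc (deg l + deg r)"

fun nleaves :: "bt \<Rightarrow> nat" where
  "nleaves Leaf = 1"
| "nleaves (Node l r) = nleaves l + nleaves r"

text \<open>For each leaf (left to right), whether it is a right child (the root-leaf of the
  trivial tree is declared not a right child).\<close>
fun leaf_right :: "bool \<Rightarrow> bt \<Rightarrow> bool list" where
  "leaf_right b Leaf = [b]"
| "leaf_right b (Node l r) = leaf_right False l @ leaf_right True r"

text \<open>Des(t) = {1 \<le> i \<le> n-1 : the (i+1)-st leaf is a right child}; the (i+1)-st leaf has
  0-based position i.\<close>
definition DesT :: "bt \<Rightarrow> nat set" where
  "DesT t = {i. 1 \<le> i \<and> i \<le> deg t - 1 \<and> leaf_right False t ! i}"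

inductive rot :: "bt \<Rightarrow> bt \<Rightarrow> bool" where
  root: "rot (Node A (Node B C)) (Node (Node A B) C)"
| left: "rot l l' \<Longrightarrow> rot (Node l r) (Node l' r)"
| right: "rot r r' \<Longrightarrow> rot (Node l r) (Node l r')"

definition tamari_le :: "bt \<Rightarrow> bt \<Rightarrow> bool" where
  "tamari_le = rot\<^sup>*\<^sup>*"

text \<open>Splitting along the path from the root to the leaf with 0-based position i
  (the (i+1)-st leaf). lsplit deletes children strictly right of the path,
  rsplit deletes children strictly left of the path, contracting unary nodes.\<close>
fun lsplit :: "nat \<Rightarrow> bt \<Rightarrow> bt" where
  "lsplit i Leaf = Leaf"
| "lsplit i (Node l r) =
     (if i < nleaves l then lsplit i l else Node l (lsplit (i - nleaves l) r))"

fun rsplit :: "nat \<Rightarrow> bt \<Rightarrow> bt" where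
  "rsplit i Leaf = Leaf"
| "rsplit i (Node l r) =
     (if i < nleaves l then Node (rsplit i l) r else rsplit (i - nleaves l) r)"

fun graft :: "bt \<Rightarrow> bt \<Rightarrow> bt" where
  "graft s Leaf = s"
| "graft s (Node l r) = Node (graft s l) r"

definition GDT :: "bt \<Rightarrow> nat set" where
  "GDT t = {i. 1 \<le> i \<and> i \<le> deg t - 1 \<and> (\<exists>s r. t = graft s r \<and> deg s = i)}"

text \<open>A permutation \<sigma> of [n] is the word \<sigma>(1)...\<sigma>(n); position k (1-based) is
  index k-1 of the list.\<close>
definition is_perm :: "nat \<Rightarrow> nat list \<Rightarrow> bool" where
  "is_perm n xs \<longleftrightarrow> length xs = n \<and> set xs = {1..n} \<and> distinct xs"

definition DesP :: "nat list \<Rightarrow> nat set" where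
  "DesP xs = {i. 1 \<le> i \<and> i < length xs \<and> xs ! (i - 1) > xs ! i}"

text \<open>Inversions as 1-based position pairs.\<close>
definition Inv :: "nat list \<Rightarrow> (nat \<times> nat) set" where
  "Inv xs = {(i, j). 1 \<le> i \<and> i < j \<and> j \<le> length xs \<and> xs ! (i - 1) > xs ! (j - 1)}"

definition weak_le :: "nat list \<Rightarrow> nat list \<Rightarrow> bool" where
  "weak_le xs ys \<longleftrightarrow> Inv xs \<subseteq> Inv ys"

definition std :: "nat list \<Rightarrow> nat list" where
  "std xs = map (\<lambda>x. card {y \<in> set xs. y \<le> x}) xs"

definition GDP :: "nat list \<Rightarrow> nat set" where
  "GDP xs = {i. 1 \<le> i \<and> i \<le> length xs - 1 \<and>
     (\<forall>a b. 1 \<le> a \<and> a \<le> i \<and> i < b \<and> b \<le> length xs \<longrightarrow> xs ! (a - 1) > xs ! (b - 1))}"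

type_synonym pf = "nat list \<times> bt"

definition pdeg :: "pf \<Rightarrow> nat" where
  "pdeg f = deg (snd f)"

definition is_pf :: "pf \<Rightarrow> bool" where
  "is_pf f \<longleftrightarrow> is_perm (deg (snd f)) (fst f) \<and> DesT (snd f) \<subseteq> DesP (fst f)"

definition park_le :: "pf \<Rightarrow> pf \<Rightarrow> bool" where
  "park_le f g \<longleftrightarrow> weak_le (fst f) (fst g) \<and> tamari_le (snd f) (snd g)"

definition lsplit_pf :: "nat \<Rightarrow> pf \<Rightarrow> pf" where
  "lsplit_pf i f = (std (take i (fst f)), lsplit i (snd f))"

definition rsplit_pf :: "nat \<Rightarrow> pf \<Rightarrow> pf" where
  "rsplit_pf i f = (std (drop i (fst f)), rsplit i (snd f))"

definition GD :: "pf \<Rightarrow> nat set" where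
  "GD f = GDP (fst f) \<inter> GDT (snd f)"

definition unit_pf :: pf where
  "unit_pf = ([], Leaf)"

text \<open>Elements of PSym are represented by their coefficient functions in the
  fundamental basis {F_f} (supported on parking functions); elements of
  PSym \<otimes> PSym by coefficient functions in the basis {F_g \<otimes> F_h}.\<close>
type_synonym psym = "pf \<Rightarrow> int"
type_synonym psym2 = "pf \<times> pf \<Rightarrow> int"

definition Fb :: "pf \<Rightarrow> psym" where
  "Fb f = (\<lambda>g. if g = f then 1 else 0)"

definition tensor :: "psym \<Rightarrow> psym \<Rightarrow> psym2" where
  "tensor x y = (\<lambda>(g, h). x g * y h)"

text \<open>Coproduct, extended linearly from Delta(F_f) = sum_{i=0}^n F_{^i f} \<otimes> F_{f^i}.
  Since ^i f has degree i and f^i degree n-i, the coefficient of F_g \<otimes> F_h only involves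
  parking functions of degree deg g + deg h.\<close>
definition Delta :: "psym \<Rightarrow> psym2" where
  "Delta x = (\<lambda>(g, h). \<Sum>f \<in> {f. is_pf f \<and> pdeg f = pdeg g + pdeg h}.
      x f * int (card {i. i \<le> pdeg f \<and> lsplit_pf i f = g \<and> rsplit_pf i f = h}))"

definition Delta_plus :: "psym \<Rightarrow> psym2" where
  "Delta_plus x = (\<lambda>p. Delta x p - tensor x (Fb unit_pf) p - tensor (Fb unit_pf) x p)"

definition Mb :: "pf \<Rightarrow> psym" where
  "Mb = (THE M. (\<forall>f. \<not> is_pf f \<longrightarrow> M f = (\<lambda>_. 0)) \<and>
      (\<forall>f. is_pf f \<longrightarrow> Fb f = (\<lambda>h. \<Sum>g \<in> {g. is_pf g \<and> park_le f g}. M g h)))"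

end

theory Submission
  imports Defs
begin


lemma nleaves_deg: "nleaves t = Suc (deg t)"
  by (induction t) auto

lemma length_lr[simp]: "length (leaf_right b t) = nleaves t"
  by (induction t arbitrary: b) auto

lemma lr_flag: "k \<ge> 1 \<Longrightarrow> leaf_right b t ! k = leaf_right c t ! k"
  by (cases t) auto

lemma lr_hd: "t \<noteq> Leaf \<Longrightarrow> leaf_right b t ! 0 = False"
proof (induction t arbitrary: b)
  case (Node l r) then show ?case
    by (cases l) (auto simp: nth_append nleaves_deg)
qed simp

lemma lr_nonempty: "leaf_right b t \<noteq> []"
  using length_lr[of b t] nleaves_deg[of t] by (metis Zero_not_Suc list.size(3))

lemma deg_lsplit: "i < nleaves t \<Longrightarrow> deg (lsplit i t) = i"
  by (induction i t rule: lsplit.induct) (auto simp: nleaves_deg)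

lemma deg_rsplit: "i < nleaves t \<Longrightarrow> deg (rsplit i t) = deg t - i"
  by (induction i t rule: rsplit.induct) (auto simp: nleaves_deg)

lemma lsplit_Leaf_iff: "i < nleaves t \<Longrightarrow> lsplit i t = Leaf \<longleftrightarrow> i = 0"
  using deg_lsplit[of i t] by (cases "lsplit i t") auto

lemma lr_lsplit: "i < nleaves t \<Longrightarrow> k < i \<Longrightarrow> leaf_right b (lsplit i t) ! k = leaf_right b t ! k"
proof (induction i t arbitrary: b k rule: lsplit.induct)
  case (1 i) then show ?case by simp
next
  case (2 i l r)
  show ?case
  proof (cases "i < nleaves l")
    case True
    then have "leaf_right b (lsplit i l) ! k = leaf_right b l ! k" using 2 by auto
    moreover have "leaf_right b l ! k = leaf_right False l ! k"
    proof (cases "k = 0")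
      case True
      have "l \<noteq> Leaf" using \<open>i < nleaves l\<close> 2(4) by (cases l) auto
      then show ?thesis using True lr_hd by metis
    qed (simp add: lr_flag)
    ultimately show ?thesis using True 2(4) by (auto simp: nth_append)
  next
    case False
    show ?thesis
    proof (cases "k < nleaves l")
      case True then show ?thesis using False by (auto simp: nth_append)
    next
      case kk: False
      define j where "j = i - nleaves l"
      have jr: "j < nleaves r" using 2(3) False j_def by auto
      have "leaf_right True (lsplit j r) ! (k - nleaves l) = leaf_right True r ! (k - nleaves l)"
      proof (cases "k - nleaves l = 0")
        case True
        have "j \<noteq> 0" using kk 2(4) j_def False by auto
        then have "lsplit j r \<noteq> Leaf" "r \<noteq> Leaf" using lsplit_Leaf_iff[OF jr] jr by auto
        then show ?thesis using True lr_hd by metis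
      next
        case F: False
        show ?thesis using 2(2)[OF False, of "k - nleaves l" True] jr j_def 2(4) kk by auto
      qed
      then show ?thesis using False kk by (auto simp: nth_append j_def)
    qed
  qed
qed

lemma lr_rsplit: "k + i < nleaves t \<Longrightarrow> k \<ge> 1 \<Longrightarrow> leaf_right b (rsplit i t) ! k = leaf_right b t ! (k + i)"
proof (induction i t arbitrary: b k rule: rsplit.induct)
  case (1 i) then show ?case by simp
next
  case (2 i l r)
  show ?case
  proof (cases "i < nleaves l")
    case True
    have len: "nleaves (rsplit i l) = nleaves l - i"
      using deg_rsplit[OF True] nleaves_deg[of l] nleaves_deg[of "rsplit i l"] True by simp
    show ?thesis
    proof (cases "k < nleaves l - i")
      case True
      then show ?thesis using 2(1)[OF \<open>i < nleaves l\<close>, of k False] 2(4) \<open>i < nleaves l\<close>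
        by (auto simp: nth_append len)
    next
      case False
      then show ?thesis using \<open>i < nleaves l\<close> by (auto simp: nth_append len)
    qed
  next
    case False
    have "leaf_right b (rsplit (i - nleaves l) r) ! k = leaf_right b r ! (k + (i - nleaves l))"
      using 2(2)[OF False, of k b] 2(3,4) False by auto
    also have "\<dots> = leaf_right True r ! (k + (i - nleaves l))" using 2(4) lr_flag by auto
    finally show ?thesis using False by (auto simp: nth_append)
  qed
qed

lemma lr_graft: "leaf_right False (graft s r) = leaf_right False s @ tl (leaf_right False r)"
proof (induction r)
  case (Node l r)
  have "tl (leaf_right False l @ leaf_right True r) = tl (leaf_right False l) @ leaf_right True r"
    using lr_nonempty by (cases "leaf_right False l") auto
  then show ?case using Node by simp
qed simp

lemma nleaves_graft: "nleaves (graft s r) = nleaves s + nleaves r - 1"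
  by (induction r) (auto simp: nleaves_deg)

lemma deg_graft: "deg (graft s r) = deg s + deg r"
  by (induction r) auto

lemma lsplit_last: "lsplit (deg t) t = t"
  by (induction t) (auto simp: nleaves_deg)

lemma rsplit_last: "rsplit (deg t) t = Leaf"
  by (induction t) (auto simp: nleaves_deg)

lemma lsplit_graft: "deg s = i \<Longrightarrow> lsplit i (graft s r) = s"
  by (induction r) (auto simp: nleaves_deg deg_graft lsplit_last)

lemma rsplit_graft: "deg s = i \<Longrightarrow> rsplit i (graft s r) = r"
  by (induction r) (auto simp: nleaves_deg deg_graft rsplit_last)

lemma lsplit0: "lsplit 0 t = Leaf"
  by (induction t) (auto simp: nleaves_deg)

lemma rsplit0: "rsplit 0 t = t"
  by (induction t) (auto simp: nleaves_deg)



lemma rot_nleaves: "rot s t \<Longrightarrow> nleaves s = nleaves t"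
  by (induction rule: rot.induct) auto

lemma rot_deg: "rot s t \<Longrightarrow> deg s = deg t"
  by (induction rule: rot.induct) auto

lemma tamari_deg: "tamari_le s t \<Longrightarrow> deg s = deg t"
  unfolding tamari_le_def by (induction rule: rtranclp_induct) (auto dest: rot_deg)

lemma tamari_refl: "tamari_le s s"
  unfolding tamari_le_def by simp

lemma tamari_trans: "tamari_le s t \<Longrightarrow> tamari_le t u \<Longrightarrow> tamari_le s u"
  unfolding tamari_le_def by simp

declare tamari_trans[trans]

lemma tamari_rot: "rot s t \<Longrightarrow> tamari_le s t"
  unfolding tamari_le_def by simp

lemma tamari_left: "tamari_le l l' \<Longrightarrow> tamari_le (Node l r) (Node l' r)"
  unfolding tamari_le_def
  by (induction rule: rtranclp_induct) (auto intro: rtranclp.rtrancl_into_rtrancl rot.left)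

lemma tamari_right: "tamari_le r r' \<Longrightarrow> tamari_le (Node l r) (Node l r')"
  unfolding tamari_le_def
  by (induction rule: rtranclp_induct) (auto intro: rtranclp.rtrancl_into_rtrancl rot.right)

lemma tamari_Node: "tamari_le l l' \<Longrightarrow> tamari_le r r' \<Longrightarrow> tamari_le (Node l r) (Node l' r')"
  by (meson tamari_left tamari_right tamari_trans)

lemma rot_lsplit: "rot s t \<Longrightarrow> tamari_le (lsplit i s) (lsplit i t)"
proof (induction arbitrary: i rule: rot.induct)
  case (root A B C)
  show ?case
    by (auto simp: tamari_refl intro!: tamari_rot rot.root)
next
  case (left l l' r)
  then show ?case by (auto simp: rot_nleaves tamari_refl intro!: tamari_rot rot.left)
next
  case (right r r' l)
  then show ?case by (auto simp: rot_nleaves tamari_refl intro!: tamari_right)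
qed

lemma rot_rsplit: "rot s t \<Longrightarrow> tamari_le (rsplit i s) (rsplit i t)"
proof (induction arbitrary: i rule: rot.induct)
  case (root A B C)
  show ?case
    by (auto simp: tamari_refl intro!: tamari_rot rot.root)
next
  case (left l l' r)
  then show ?case by (auto simp: rot_nleaves tamari_refl intro!: tamari_left)
next
  case (right r r' l)
  then show ?case by (auto simp: rot_nleaves tamari_refl intro!: tamari_rot rot.right)
qed

lemma tamari_lsplit: "tamari_le s t \<Longrightarrow> tamari_le (lsplit i s) (lsplit i t)"
  unfolding tamari_le_def
  by (induction rule: rtranclp_induct) (auto dest!: rot_lsplit[of _ _ i] simp: tamari_le_def)

lemma tamari_rsplit: "tamari_le s t \<Longrightarrow> tamari_le (rsplit i s) (rsplit i t)"
  unfolding tamari_le_def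
  by (induction rule: rtranclp_induct) (auto dest!: rot_rsplit[of _ _ i] simp: tamari_le_def)

lemma tamari_graft_left: "tamari_le s s' \<Longrightarrow> tamari_le (graft s r) (graft s' r)"
  by (induction r) (auto intro: tamari_left)

lemma tamari_graft_right: "tamari_le r r' \<Longrightarrow> tamari_le (graft s r) (graft s r')"
  unfolding tamari_le_def
proof (induction rule: rtranclp_induct)
  case (step y z)
  have "rot (graft s y) (graft s z)" using step(2)
    by (induction rule: rot.induct) (auto intro: rot.intros)
  then show ?case using step(3) by simp
qed simp

lemma tamari_graft: "tamari_le s s' \<Longrightarrow> tamari_le r r' \<Longrightarrow> tamari_le (graft s r) (graft s' r')"
  by (meson tamari_graft_left tamari_graft_right tamari_trans)

lemma node_graft: "tamari_le (Node l (graft A B)) (graft (Node l A) B)"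
proof (induction B)
  case Leaf then show ?case by (simp add: tamari_refl)
next
  case (Node B1 B2)
  have "tamari_le (Node l (Node (graft A B1) B2)) (Node (Node l (graft A B1)) B2)"
    by (intro tamari_rot rot.root)
  also have "tamari_le \<dots> (Node (graft (Node l A) B1) B2)"
    by (intro tamari_left Node)
  finally show ?case by simp
qed

lemma split_graft_ge: "i < nleaves s \<Longrightarrow> tamari_le s (graft (lsplit i s) (rsplit i s))"
proof (induction i s rule: lsplit.induct)
  case (1 i) then show ?case by (simp add: tamari_refl)
next
  case (2 i l r)
  show ?case
  proof (cases "i < nleaves l")
    case True
    then show ?thesis using 2(1)[OF True True] by (simp add: tamari_left)
  next
    case False
    then have "i - nleaves l < nleaves r" using 2(3) by auto
    then have "tamari_le (Node l r) (Node l (graft (lsplit (i - nleaves l) r) (rsplit (i - nleaves l) r)))"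
      using 2(2)[OF False] by (simp add: tamari_right)
    also have "tamari_le \<dots> (graft (Node l (lsplit (i - nleaves l) r)) (rsplit (i - nleaves l) r))"
      by (rule node_graft)
    finally show ?thesis using False by simp
  qed
qed

fun phi :: "bt \<Rightarrow> nat" where
  "phi Leaf = 0"
| "phi (Node l r) = nleaves l + phi l + phi r"

lemma rot_phi: "rot s t \<Longrightarrow> phi s < phi t"
  by (induction rule: rot.induct) (auto simp: rot_deg nleaves_deg)

lemma tamari_phi: "tamari_le s t \<Longrightarrow> s = t \<or> phi s < phi t"
  unfolding tamari_le_def
  by (induction rule: rtranclp_induct) (auto dest: rot_phi)

lemma tamari_antisym: "tamari_le s t \<Longrightarrow> tamari_le t s \<Longrightarrow> s = t"
  using tamari_phi[of s t] tamari_phi[of t s] by auto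

lemma finite_deg_le: "finite {t. deg t \<le> n}"
proof (induction n)
  case 0
  have "{t. deg t \<le> 0} = {Leaf}" by (auto elim: deg.elims)
  then show ?case by simp
next
  case (Suc n)
  have "{t. deg t \<le> Suc n} \<subseteq> insert Leaf ((\<lambda>(a,b). Node a b) ` ({t. deg t \<le> n} \<times> {t. deg t \<le> n}))"
  proof
    fix t assume "t \<in> {t. deg t \<le> Suc n}"
    then show "t \<in> insert Leaf ((\<lambda>(a,b). Node a b) ` ({t. deg t \<le> n} \<times> {t. deg t \<le> n}))"
      by (cases t) auto
  qed
  then show ?case using Suc by (meson finite_SigmaI finite_imageI finite_insert finite_subset)
qed

lemma finite_deg: "finite {t. deg t = n}"
  by (rule finite_subset[OF _ finite_deg_le[of n]]) auto



definition cnt :: "nat list \<Rightarrow> nat \<Rightarrow> nat" where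
  "cnt xs x = card {y \<in> set xs. y \<le> x}"

lemma std_cnt: "std xs = map (cnt xs) xs"
  by (simp add: std_def cnt_def)

lemma cnt_mono_strict: "x \<in> set xs \<Longrightarrow> y \<in> set xs \<Longrightarrow> x < y \<Longrightarrow> cnt xs x < cnt xs y"
proof -
  assume a: "x \<in> set xs" "y \<in> set xs" "x < y"
  let ?A = "{z \<in> set xs. z \<le> x}" and ?B = "{z \<in> set xs. z \<le> y}"
  have "insert y ?A \<subseteq> ?B" using a by auto
  then have "card (insert y ?A) \<le> card ?B" by (intro card_mono) auto
  moreover have "card (insert y ?A) = Suc (card ?A)" using a by (intro card_insert_disjoint) auto
  ultimately show ?thesis unfolding cnt_def by simp
qed

lemma cnt_less_iff: "x \<in> set xs \<Longrightarrow> y \<in> set xs \<Longrightarrow> cnt xs x < cnt xs y \<longleftrightarrow> x < y"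
  by (metis cnt_mono_strict linorder_neq_iff order_less_asym)

lemma cnt_inj: "x \<in> set xs \<Longrightarrow> y \<in> set xs \<Longrightarrow> cnt xs x = cnt xs y \<longleftrightarrow> x = y"
  by (metis cnt_mono_strict linorder_neq_iff order_less_irrefl)

lemma cnt_range: "x \<in> set xs \<Longrightarrow> 1 \<le> cnt xs x \<and> cnt xs x \<le> card (set xs)"
  unfolding cnt_def
  by (auto intro!: card_mono Suc_leI card_gt_0_iff[THEN iffD2])

lemma std_perm: "distinct xs \<Longrightarrow> is_perm (length xs) (std xs)"
proof -
  assume d: "distinct xs"
  have inj: "inj_on (cnt xs) (set xs)" by (auto simp: inj_on_def cnt_inj)
  have sub: "cnt xs ` set xs \<subseteq> {1..length xs}" using cnt_range distinct_card[OF d] by fastforce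
  have "card (cnt xs ` set xs) = length xs" using card_image[OF inj] distinct_card[OF d] by simp
  then have "cnt xs ` set xs = {1..length xs}"
    using sub by (metis card_atLeastAtMost card_subset_eq diff_Suc_1 finite_atLeastAtMost)
  moreover have "distinct (map (cnt xs) xs)" using d inj by (simp add: distinct_map)
  ultimately show ?thesis by (simp add: is_perm_def std_cnt)
qed

lemma std_nth: "k < length xs \<Longrightarrow> std xs ! k = cnt xs (xs ! k)"
  by (simp add: std_cnt)

lemma std_length[simp]: "length (std xs) = length xs"
  by (simp add: std_def)

lemma Inv_std: "Inv (std xs) = Inv xs"
  unfolding Inv_def by (auto simp: std_nth cnt_less_iff)

lemma DesP_std: "DesP (std xs) = DesP xs"
  unfolding DesP_def by (auto simp: std_nth cnt_less_iff)

lemma perm_cnt: "is_perm n xs \<Longrightarrow> x \<in> set xs \<Longrightarrow> cnt xs x = x"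
  unfolding is_perm_def cnt_def
  by (auto simp: Collect_conj_eq[symmetric] intro: arg_cong[where f=card, of _ "{1..x}", simplified])

lemma std_perm_id: "is_perm n xs \<Longrightarrow> std xs = xs"
  by (simp add: std_cnt perm_cnt map_idI)

lemma cnt_shift: "x \<in> set xs \<Longrightarrow> cnt (map (\<lambda>y. y + m) xs) (x + m) = cnt xs x"
proof -
  have "{y \<in> set (map (\<lambda>y. y + m) xs). y \<le> x + m} = (\<lambda>y. y + m) ` {y \<in> set xs. y \<le> x}"
    by auto
  then show ?thesis unfolding cnt_def by (simp add: card_image inj_on_def)
qed

lemma std_shift: "std (map (\<lambda>y. y + m) xs) = std xs"
  by (simp add: std_cnt cnt_shift)

lemma Inv_take: "Inv (take i xs) = {(a, b). (a, b) \<in> Inv xs \<and> b \<le> i}"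
  unfolding Inv_def by auto

lemma Inv_drop: "(a, b) \<in> Inv (drop i xs) \<longleftrightarrow> 1 \<le> a \<and> (a + i, b + i) \<in> Inv xs"
  unfolding Inv_def by (auto simp: add.commute add.left_commute)

lemma DesP_take: "DesP (take i xs) = {k \<in> DesP xs. k < i}"
  unfolding DesP_def by auto

lemma DesP_drop: "k \<in> DesP (drop i xs) \<longleftrightarrow> 1 \<le> k \<and> k + i \<in> DesP xs"
  unfolding DesP_def by (auto simp: add.commute add.left_commute)



lemma perm_val: assumes p: "is_perm n xs" and k: "k < n"
  shows "xs ! k = card {j. j < n \<and> xs ! j \<le> xs ! k}"
proof -
  have len: "length xs = n" and d: "distinct xs" using p by (auto simp: is_perm_def)
  have "xs ! k = cnt xs (xs ! k)" using perm_cnt[OF p] k len by simp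
  also have "{y \<in> set xs. y \<le> xs ! k} = (!) xs ` {j. j < n \<and> xs ! j \<le> xs ! k}"
    using len by (auto simp: in_set_conv_nth)
  moreover have "inj_on ((!) xs) {j. j < n \<and> xs ! j \<le> xs ! k}"
    using d len by (auto simp: inj_on_def nth_eq_iff_index_eq)
  ultimately show ?thesis unfolding cnt_def by (simp add: card_image)
qed

lemma perm_le_Inv: assumes p: "is_perm n xs" and j: "j < n" and k: "k < n"
  shows "xs ! j \<le> xs ! k \<longleftrightarrow> j = k \<or> (j < k \<and> (Suc j, Suc k) \<notin> Inv xs) \<or> (k < j \<and> (Suc k, Suc j) \<in> Inv xs)"
proof -
  have len: "length xs = n" and d: "distinct xs" using p by (auto simp: is_perm_def)
  have ne: "j \<noteq> k \<Longrightarrow> xs ! j \<noteq> xs ! k" using d len j k by (simp add: nth_eq_iff_index_eq)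
  show ?thesis using ne len j k unfolding Inv_def by (cases j k rule: linorder_cases) auto
qed

lemma perm_Inv_eq: assumes "is_perm n xs" "is_perm n ys" "Inv xs = Inv ys" shows "xs = ys"
proof (rule nth_equalityI)
  show "length xs = length ys" using assms by (simp add: is_perm_def)
  fix k assume "k < length xs"
  then have k: "k < n" using assms by (simp add: is_perm_def)
  have "{j. j < n \<and> xs ! j \<le> xs ! k} = {j. j < n \<and> ys ! j \<le> ys ! k}"
    using perm_le_Inv[OF assms(1) _ k] perm_le_Inv[OF assms(2) _ k] assms(3) by auto
  then show "xs ! k = ys ! k" using perm_val[OF assms(1) k] perm_val[OF assms(2) k] by simp
qed

lemma join_perm: assumes "is_perm i a" "is_perm m b"
  shows "is_perm (i + m) (map (\<lambda>x. x + m) a @ b)"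
proof -
  have s: "set (map (\<lambda>x. x + m) a) = {m+1..m+i}"
  proof -
    have "(\<lambda>x. x + m) ` {1..i} = {m+1..m+i}"
    proof
      show "{m+1..m+i} \<subseteq> (\<lambda>x. x + m) ` {1..i}"
      proof
        fix y assume "y \<in> {m+1..m+i}"
        then have "y - m \<in> {1..i}" "y = (y - m) + m" by auto
        then show "y \<in> (\<lambda>x. x + m) ` {1..i}" by blast
      qed
    qed auto
    then show ?thesis using assms(1) unfolding is_perm_def by simp
  qed
  show ?thesis using assms s unfolding is_perm_def
    by (auto simp: distinct_map inj_on_def)
qed

lemma weak_glue:
  assumes "length xs = n" "length ys = n" "i \<in> GDP ys"
    "Inv (take i xs) \<subseteq> Inv (take i ys)" "Inv (drop i xs) \<subseteq> Inv (drop i ys)"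
  shows "Inv xs \<subseteq> Inv ys"
proof
  fix p assume p: "p \<in> Inv xs"
  obtain a b where ab: "p = (a, b)" by fastforce
  have ab1: "1 \<le> a" "a < b" "b \<le> n" using p ab assms(1) by (auto simp: Inv_def)
  show "p \<in> Inv ys"
  proof (cases "b \<le> i")
    case True
    then show ?thesis using assms(4) p ab by (auto simp: Inv_take)
  next
    case False
    show ?thesis
    proof (cases "i < a")
      case True
      have "(a - i, b - i) \<in> Inv (drop i xs)" using p ab True False by (simp add: Inv_drop)
      then have "(a - i, b - i) \<in> Inv (drop i ys)" using assms(5) by blast
      then show ?thesis using True False ab by (simp add: Inv_drop)
    next
      case F2: False
      then show ?thesis using assms(2,3) ab ab1 False unfolding GDP_def Inv_def by auto
    qed
  qed
qed

lemma GDP_split: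
  assumes p: "is_perm n xs" and g: "i \<in> GDP xs"
  shows "map (\<lambda>x. x + (n - i)) (std (take i xs)) @ std (drop i xs) = xs"
    and "std (drop i xs) = drop i xs"
proof -
  have len: "length xs = n" and d: "distinct xs" and sx: "set xs = {1..n}" using p by (auto simp: is_perm_def)
  have i: "1 \<le> i" "i < n" using g len by (auto simp: GDP_def)
  let ?A = "set (take i xs)" and ?B = "set (drop i xs)"
  have AB: "x > y" if xA: "x \<in> ?A" and yB: "y \<in> ?B" for x y
  proof -
    obtain q where q0: "q < length (take i xs)" "x = take i xs ! q" using xA by (auto simp: in_set_conv_nth)
    then have q: "q < i" "x = xs ! q" by auto
    obtain r where r0: "r < length (drop i xs)" "y = drop i xs ! r" using yB by (auto simp: in_set_conv_nth)
    then have r: "r < n - i" "y = xs ! (i + r)" using len i by auto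
    have "\<forall>a b. 1 \<le> a \<and> a \<le> i \<and> i < b \<and> b \<le> length xs \<longrightarrow> xs ! (a - 1) > xs ! (b - 1)"
      using g unfolding GDP_def by blast
    moreover have "1 \<le> Suc q \<and> Suc q \<le> i \<and> i < Suc (i + r) \<and> Suc (i + r) \<le> length xs"
      using q r len i by auto
    ultimately have "xs ! (Suc q - 1) > xs ! (Suc (i + r) - 1)" by blast
    then show ?thesis using q r by simp
  qed
  have un: "set xs = ?A \<union> ?B" by (metis append_take_drop_id set_append)
  have dis: "?A \<inter> ?B = {}" using d by (metis append_take_drop_id distinct_append)
  have cB: "card ?B = n - i" using d len by (simp add: distinct_card)
  have c1: "cnt (drop i xs) y = y" if "y \<in> ?B" for y
  proof -
    have "{z \<in> ?B. z \<le> y} = {z \<in> set xs. z \<le> y}" using un AB that by fastforce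
    then show ?thesis using perm_cnt[OF p, of y] that un unfolding cnt_def by auto
  qed
  show s2: "std (drop i xs) = drop i xs" by (simp add: std_cnt c1 map_idI)
  have c2: "cnt (take i xs) x + (n - i) = x" if "x \<in> ?A" for x
  proof -
    have e: "{z \<in> set xs. z \<le> x} = {z \<in> ?A. z \<le> x} \<union> ?B" using un AB that by fastforce
    have "card {z \<in> set xs. z \<le> x} = card {z \<in> ?A. z \<le> x} + card ?B"
      unfolding e using dis by (intro card_Un_disjoint) auto
    then show ?thesis using perm_cnt[OF p, of x] that un cB unfolding cnt_def by auto
  qed
  have "map (\<lambda>x. x + (n - i)) (std (take i xs)) = take i xs"
    by (simp add: std_cnt c2 map_idI)
  then show "map (\<lambda>x. x + (n - i)) (std (take i xs)) @ std (drop i xs) = xs" using s2 by simp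
qed



definition pf_join :: "pf \<Rightarrow> pf \<Rightarrow> pf" where
  "pf_join u v = (map (\<lambda>x. x + deg (snd v)) (fst u) @ fst v, graft (snd u) (snd v))"

lemma DesP_iff: "k \<in> DesP xs \<longleftrightarrow> 1 \<le> k \<and> k < length xs \<and> xs ! (k - 1) > xs ! k"
  by (simp add: DesP_def)

lemma DesT_iff: "k \<in> DesT t \<longleftrightarrow> 1 \<le> k \<and> k \<le> deg t - 1 \<and> leaf_right False t ! k"
  by (simp add: DesT_def)

lemma split_pf:
  assumes f: "is_pf f" and i: "i \<le> pdeg f"
  shows "is_pf (lsplit_pf i f)" "is_pf (rsplit_pf i f)"
    "pdeg (lsplit_pf i f) = i" "pdeg (rsplit_pf i f) = pdeg f - i"
proof -
  obtain s t where ft: "f = (s, t)" by fastforce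
  let ?n = "deg t"
  have p: "is_perm ?n s" and D: "DesT t \<subseteq> DesP s" using f ft by (auto simp: is_pf_def)
  have len: "length s = ?n" and d: "distinct s" using p by (auto simp: is_perm_def)
  have i': "i \<le> ?n" using i ft by (simp add: pdeg_def)
  have il: "i < nleaves t" using i' by (simp add: nleaves_deg)
  show dl: "pdeg (lsplit_pf i f) = i" using ft deg_lsplit[OF il] by (simp add: pdeg_def lsplit_pf_def)
  show dr: "pdeg (rsplit_pf i f) = pdeg f - i" using ft deg_rsplit[OF il] by (simp add: pdeg_def rsplit_pf_def)
  have "length (take i s) = i" using len i' by simp
  then have "is_perm i (std (take i s))" using std_perm[of "take i s"] d by simp
  moreover have "DesT (lsplit i t) \<subseteq> DesP (std (take i s))"
  proof
    fix k assume k: "k \<in> DesT (lsplit i t)"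
    then have k1: "1 \<le> k" "k < i" "leaf_right False (lsplit i t) ! k"
      using deg_lsplit[OF il] by (auto simp: DesT_iff)
    then have "k \<in> DesT t" using lr_lsplit[OF il k1(2)] i' by (auto simp: DesT_iff)
    then have "k \<in> DesP s" using D by blast
    then show "k \<in> DesP (std (take i s))" using k1 by (simp add: DesP_std DesP_take)
  qed
  ultimately show "is_pf (lsplit_pf i f)" using ft deg_lsplit[OF il]
    by (simp add: is_pf_def lsplit_pf_def)
  have "is_perm (?n - i) (std (drop i s))" using std_perm[of "drop i s"] d len by simp
  moreover have "DesT (rsplit i t) \<subseteq> DesP (std (drop i s))"
  proof
    fix k assume k: "k \<in> DesT (rsplit i t)"
    then have k1: "1 \<le> k" "k + i < ?n" "leaf_right False (rsplit i t) ! k"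
      using deg_rsplit[OF il] by (auto simp: DesT_iff)
    then have "k + i \<in> DesT t" using lr_rsplit[of k i t False] by (auto simp: DesT_iff nleaves_deg)
    then have "k + i \<in> DesP s" using D by blast
    then show "k \<in> DesP (std (drop i s))" using k1 by (simp add: DesP_std DesP_drop)
  qed
  ultimately show "is_pf (rsplit_pf i f)" using ft deg_rsplit[OF il]
    by (simp add: is_pf_def rsplit_pf_def)
qed

lemma GD_rejoin:
  assumes g: "is_pf g" and i: "i \<in> GD g"
  shows "pf_join (lsplit_pf i g) (rsplit_pf i g) = g"
proof -
  obtain s t where gt: "g = (s, t)" by fastforce
  let ?n = "deg t"
  have p: "is_perm ?n s" using g gt by (auto simp: is_pf_def)
  have gp: "i \<in> GDP s" and gtr: "i \<in> GDT t" using i gt by (auto simp: GD_def)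
  obtain a b where ab: "t = graft a b" "deg a = i" using gtr by (auto simp: GDT_def)
  have il: "i < nleaves t" using gtr by (auto simp: GDT_def nleaves_deg)
  have "deg (rsplit i t) = ?n - i" using deg_rsplit[OF il] .
  then show ?thesis using GDP_split[OF p gp] ab gt
    by (simp add: pf_join_def lsplit_pf_def rsplit_pf_def lsplit_graft rsplit_graft)
qed

lemma join_pf:
  assumes u: "is_pf u" and v: "is_pf v" and i: "pdeg u = i" "1 \<le> i" and m: "pdeg v = m" "1 \<le> m"
  shows "is_pf (pf_join u v)" "pdeg (pf_join u v) = i + m" "i \<in> GD (pf_join u v)"
    "lsplit_pf i (pf_join u v) = u" "rsplit_pf i (pf_join u v) = v"
proof -
  obtain s1 t1 where ut: "u = (s1, t1)" by fastforce
  obtain s2 t2 where vt: "v = (s2, t2)" by fastforce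
  have p1: "is_perm i s1" and D1: "DesT t1 \<subseteq> DesP s1" and dt1: "deg t1 = i"
    using u ut i by (auto simp: is_pf_def pdeg_def)
  have p2: "is_perm m s2" and D2: "DesT t2 \<subseteq> DesP s2" and dt2: "deg t2 = m"
    using v vt m by (auto simp: is_pf_def pdeg_def)
  have l1: "length s1 = i" and l2: "length s2 = m" and set1: "set s1 = {1..i}" and set2: "set s2 = {1..m}"
    using p1 p2 by (auto simp: is_perm_def)
  let ?s = "map (\<lambda>x. x + m) s1 @ s2" and ?t = "graft t1 t2"
  have J: "pf_join u v = (?s, ?t)" using ut vt dt2 by (simp add: pf_join_def)
  have dt: "deg ?t = i + m" using dt1 dt2 by (simp add: deg_graft)
  show "pdeg (pf_join u v) = i + m" using J dt by (simp add: pdeg_def)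
  have ls: "length ?s = i + m" using l1 l2 by simp
  have v1: "1 \<le> s1 ! q \<and> s1 ! q \<le> i" if "q < i" for q
    using set1 l1 that nth_mem[of q s1] by auto
  have v2: "1 \<le> s2 ! q \<and> s2 ! q \<le> m" if "q < m" for q
    using set2 l2 that nth_mem[of q s2] by auto
  have sn1: "?s ! q = s1 ! q + m" if "q < i" for q using that l1 by (simp add: nth_append)
  have sn2: "?s ! (i + q) = s2 ! q" for q using l1 by (simp add: nth_append)
  have lr: "leaf_right False ?t = leaf_right False t1 @ tl (leaf_right False t2)" by (rule lr_graft)
  have lt1: "length (leaf_right False t1) = Suc i" using dt1 by (simp add: nleaves_deg)
  have DT: "DesT ?t \<subseteq> DesP ?s"
  proof
    fix k assume k: "k \<in> DesT ?t"
    then have k1: "1 \<le> k" "k < i + m" "leaf_right False ?t ! k" using dt by (auto simp: DesT_iff)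
    show "k \<in> DesP ?s"
    proof (cases k i rule: linorder_cases)
      case less
      then have "leaf_right False t1 ! k" using k1 lr lt1 by (simp add: nth_append)
      then have "k \<in> DesT t1" using less k1 dt1 by (simp add: DesT_iff)
      then have "k \<in> DesP s1" using D1 by blast
      then have "s1 ! (k - 1) > s1 ! k" by (simp add: DesP_iff)
      then show ?thesis using k1 less sn1[of k] sn1[of "k - 1"] ls by (simp add: DesP_iff)
    next
      case equal
      have "?s ! (k - 1) = s1 ! (i - 1) + m" using sn1[of "i - 1"] equal k1 by simp
      moreover have "?s ! k = s2 ! 0" using sn2[of 0] equal by simp
      moreover have "s2 ! 0 \<le> m" using v2[of 0] m by simp
      moreover have "1 \<le> s1 ! (i - 1)" using v1[of "i - 1"] i by simp
      ultimately show ?thesis using k1 ls by (simp add: DesP_iff)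
    next
      case greater
      have "tl (leaf_right False t2) ! (k - Suc i) = leaf_right False t2 ! (k - i)"
      proof -
        have e: "k - i = Suc (k - Suc i)" using greater by simp
        show ?thesis unfolding e using lr_nonempty[of False t2] by (cases "leaf_right False t2") auto
      qed
      then have "leaf_right False t2 ! (k - i)" using k1 lr lt1 greater by (simp add: nth_append)
      moreover have "1 \<le> k - i" "k - i \<le> deg t2 - 1" using greater k1 dt2 by linarith+
      ultimately have "k - i \<in> DesT t2" unfolding DesT_iff by blast
      then have "k - i \<in> DesP s2" using D2 by blast
      then have "s2 ! (k - i - 1) > s2 ! (k - i)" by (simp add: DesP_iff)
      moreover have "?s ! (k - 1) = s2 ! (k - i - 1)"
      proof -
        have e: "k - 1 = i + (k - i - 1)" using greater by simp
        show ?thesis unfolding e by (rule sn2)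
      qed
      moreover have "?s ! k = s2 ! (k - i)" using sn2[of "k - i"] greater by simp
      ultimately show ?thesis using k1 ls by (simp add: DesP_iff)
    qed
  qed
  show "is_pf (pf_join u v)" using J join_perm[OF p1 p2] DT dt by (simp add: is_pf_def)
  have "i \<in> GDP ?s"
  proof -
    have "?s ! (a - 1) > ?s ! (b - 1)" if "1 \<le> a" "a \<le> i" "i < b" "b \<le> i + m" for a b
    proof -
      have "?s ! (a - 1) = s1 ! (a - 1) + m" using sn1[of "a - 1"] that by simp
      moreover have "?s ! (b - 1) = s2 ! (b - 1 - i)" using sn2[of "b - 1 - i"] that by simp
      moreover have "s2 ! (b - 1 - i) \<le> m" using v2[of "b - 1 - i"] that by simp
      moreover have "1 \<le> s1 ! (a - 1)" using v1[of "a - 1"] that by simp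
      ultimately show ?thesis by simp
    qed
    then show ?thesis using ls i m unfolding GDP_def by auto
  qed
  moreover have "i \<in> GDT ?t" using dt dt1 i m unfolding GDT_def by auto
  ultimately show "i \<in> GD (pf_join u v)" using J by (simp add: GD_def)
  have "take i ?s = map (\<lambda>x. x + m) s1" "drop i ?s = s2" using l1 by auto
  then show "lsplit_pf i (pf_join u v) = u" "rsplit_pf i (pf_join u v) = v"
    using J ut vt std_shift[of m s1] std_perm_id[OF p1] std_perm_id[OF p2]
    lsplit_graft[OF dt1] rsplit_graft[OF dt1]
    by (simp_all add: lsplit_pf_def rsplit_pf_def)
qed



definition Up :: "pf \<Rightarrow> pf set" where
  "Up f = {g. is_pf g \<and> park_le f g}"

lemma park_pdeg: "park_le f g \<Longrightarrow> pdeg f = pdeg g"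
  by (simp add: park_le_def pdeg_def tamari_deg)

lemma park_refl: "park_le f f"
  by (simp add: park_le_def weak_le_def tamari_refl)

lemma park_trans: "park_le f g \<Longrightarrow> park_le g h \<Longrightarrow> park_le f h"
  unfolding park_le_def weak_le_def using tamari_trans by blast

lemma park_antisym: "is_pf f \<Longrightarrow> is_pf g \<Longrightarrow> park_le f g \<Longrightarrow> park_le g f \<Longrightarrow> f = g"
proof -
  assume a: "is_pf f" "is_pf g" "park_le f g" "park_le g f"
  have t: "snd f = snd g" using a tamari_antisym unfolding park_le_def by blast
  have "Inv (fst f) = Inv (fst g)" using a unfolding park_le_def weak_le_def by blast
  then have "fst f = fst g" using a t perm_Inv_eq unfolding is_pf_def by metis
  then show ?thesis using t by (simp add: prod_eq_iff)
qed

lemma finite_P: "finite {f. is_pf f \<and> pdeg f = n}"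
proof -
  have "{f. is_pf f \<and> pdeg f = n} \<subseteq> {xs. set xs \<subseteq> {1..n} \<and> length xs = n} \<times> {t. deg t = n}"
    by (auto simp: is_pf_def pdeg_def is_perm_def)
  moreover have "finite ({xs. set xs \<subseteq> {1..n} \<and> length xs = n} \<times> {t. deg t = n})"
    using finite_lists_length_eq[of "{1..n}" n] finite_deg[of n] by blast
  ultimately show ?thesis using finite_subset by blast
qed

lemma finite_Up: "finite (Up f)"
proof -
  have "Up f \<subseteq> {g. is_pf g \<and> pdeg g = pdeg f}" by (auto simp: Up_def park_pdeg)
  then show ?thesis using finite_P finite_subset by blast
qed

lemma Inv_std_take: "Inv (std (take i xs)) = {(a, b). (a, b) \<in> Inv xs \<and> b \<le> i}"
  by (simp add: Inv_std Inv_take)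

lemma park_lsplit: "park_le f g \<Longrightarrow> park_le (lsplit_pf i f) (lsplit_pf i g)"
  unfolding park_le_def weak_le_def lsplit_pf_def
  by (auto simp: Inv_std_take tamari_lsplit)

lemma park_rsplit: "park_le f g \<Longrightarrow> park_le (rsplit_pf i f) (rsplit_pf i g)"
  unfolding park_le_def weak_le_def rsplit_pf_def
  by (auto simp: Inv_std Inv_drop tamari_rsplit)

lemma park_glue:
  assumes f: "is_pf f" and g: "is_pf g" and d: "pdeg f = pdeg g" and i: "i \<in> GD g"
    and l: "park_le (lsplit_pf i f) (lsplit_pf i g)" and r: "park_le (rsplit_pf i f) (rsplit_pf i g)"
  shows "park_le f g"
proof -
  have lf: "length (fst f) = pdeg f" "length (fst g) = pdeg g" using f g
    by (auto simp: is_pf_def is_perm_def pdeg_def)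
  have gp: "i \<in> GDP (fst g)" and gt: "i \<in> GDT (snd g)" using i by (auto simp: GD_def)
  have w: "Inv (fst f) \<subseteq> Inv (fst g)"
    using weak_glue[of "fst f" "pdeg g" "fst g" i] lf d gp l r
    unfolding park_le_def weak_le_def lsplit_pf_def rsplit_pf_def by (simp add: Inv_std)
  obtain a b where ab: "snd g = graft a b" "deg a = i" using gt by (auto simp: GDT_def)
  have il: "i < nleaves (snd f)" using gt d by (auto simp: GDT_def nleaves_deg pdeg_def)
  have "tamari_le (snd f) (graft (lsplit i (snd f)) (rsplit i (snd f)))" by (rule split_graft_ge[OF il])
  also have "tamari_le \<dots> (graft a b)"
    using l r ab lsplit_graft[OF ab(2)] rsplit_graft[OF ab(2)]
    unfolding park_le_def lsplit_pf_def rsplit_pf_def by (auto intro: tamari_graft)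
  finally show ?thesis using w ab by (simp add: park_le_def weak_le_def)
qed

lemma split_bij:
  assumes f: "is_pf f" and n: "pdeg f = n" and i: "1 \<le> i" "i < n"
  shows "bij_betw (\<lambda>g. (lsplit_pf i g, rsplit_pf i g)) {g \<in> Up f. i \<in> GD g}
           (Up (lsplit_pf i f) \<times> Up (rsplit_pf i f))"
proof (rule bij_betwI')
  fix x y assume xy: "x \<in> {g \<in> Up f. i \<in> GD g}" "y \<in> {g \<in> Up f. i \<in> GD g}"
  show "((lsplit_pf i x, rsplit_pf i x) = (lsplit_pf i y, rsplit_pf i y)) = (x = y)"
  proof
    assume e: "(lsplit_pf i x, rsplit_pf i x) = (lsplit_pf i y, rsplit_pf i y)"
    have "x = pf_join (lsplit_pf i x) (rsplit_pf i x)" using GD_rejoin[of x i] xy(1) by (simp add: Up_def)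
    also have "\<dots> = pf_join (lsplit_pf i y) (rsplit_pf i y)" using e by simp
    also have "\<dots> = y" using GD_rejoin[of y i] xy(2) by (simp add: Up_def)
    finally show "x = y" .
  qed simp
next
  fix x assume x: "x \<in> {g \<in> Up f. i \<in> GD g}"
  then have xp: "is_pf x" "park_le f x" "i \<in> GD x" by (auto simp: Up_def)
  have "i \<le> pdeg x" using xp n i park_pdeg by auto
  then show "(lsplit_pf i x, rsplit_pf i x) \<in> Up (lsplit_pf i f) \<times> Up (rsplit_pf i f)"
    using split_pf[of x i] xp park_lsplit[OF xp(2)] park_rsplit[OF xp(2)] by (simp add: Up_def)
next
  fix y assume y: "y \<in> Up (lsplit_pf i f) \<times> Up (rsplit_pf i f)"
  obtain u v where uv: "y = (u, v)" by (cases y) blast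
  have u: "is_pf u" "park_le (lsplit_pf i f) u" and v: "is_pf v" "park_le (rsplit_pf i f) v"
    using y uv by (auto simp: Up_def)
  have du: "pdeg u = i" using split_pf[OF f, of i] n i park_pdeg[OF u(2)] by auto
  have dv: "pdeg v = n - i" using split_pf[OF f, of i] n i park_pdeg[OF v(2)] by auto
  note J = join_pf[OF u(1) v(1) du i(1) dv]
  have n1: "1 \<le> n - i" using i by simp
  have jp: "is_pf (pf_join u v)" "pdeg (pf_join u v) = n" "i \<in> GD (pf_join u v)"
    "lsplit_pf i (pf_join u v) = u" "rsplit_pf i (pf_join u v) = v"
    using J[OF n1] i by auto
  have "park_le f (pf_join u v)"
    using park_glue[OF f jp(1) _ jp(3)] jp u v n by simp
  then show "\<exists>x\<in>{g \<in> Up f. i \<in> GD g}. y = (lsplit_pf i x, rsplit_pf i x)"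
    using jp uv by (intro bexI[of _ "pf_join u v"]) (simp_all add: Up_def)
qed



lemma moeb_unique:
  fixes x y :: "'a \<Rightarrow> 'b::ab_group_add"
  assumes fin: "\<And>f. f \<in> P \<Longrightarrow> finite (U f)"
    and rfl: "\<And>f. f \<in> P \<Longrightarrow> f \<in> U f"
    and sub: "\<And>f g. f \<in> P \<Longrightarrow> g \<in> U f \<Longrightarrow> g \<in> P \<and> U g \<subseteq> U f"
    and anti: "\<And>f g. f \<in> P \<Longrightarrow> g \<in> U f \<Longrightarrow> f \<in> U g \<Longrightarrow> g = f"
    and eq: "\<And>f. f \<in> P \<Longrightarrow> sum x (U f) = sum y (U f)"
  shows "f \<in> P \<Longrightarrow> x f = y f"
proof (induction "card (U f)" arbitrary: f rule: less_induct)
  case less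
  have "x g = y g" if g: "g \<in> U f - {f}" for g
  proof -
    have gP: "g \<in> P" and s: "U g \<subseteq> U f" using sub[OF less(2)] g by auto
    have "f \<notin> U g" using anti[OF less(2)] g by auto
    then have "U g \<subset> U f" using s rfl[OF less(2)] by blast
    then have "card (U g) < card (U f)" using fin[OF less(2)] by (rule psubset_card_mono[rotated])
    then show ?thesis using less(1) gP by blast
  qed
  then have "sum x (U f - {f}) = sum y (U f - {f})" by (rule sum.cong[OF refl])
  moreover have "sum x (U f) = x f + sum x (U f - {f})" "sum y (U f) = y f + sum y (U f - {f})"
    using fin[OF less(2)] rfl[OF less(2)] by (simp_all add: sum.remove)
  ultimately show ?case using eq[OF less(2)] by simp
qed

lemma Up_sub: "g \<in> Up f \<Longrightarrow> Up g \<subseteq> Up f"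
proof -
  assume g: "g \<in> Up f"
  have fg: "park_le f g" using g by (simp add: Up_def)
  show "Up g \<subseteq> Up f" using park_trans[OF fg] by (auto simp: Up_def)
qed

lemma Up_card_less: "is_pf f \<Longrightarrow> g \<in> Up f - {f} \<Longrightarrow> card (Up g) < card (Up f)"
proof -
  assume f: "is_pf f" and g: "g \<in> Up f - {f}"
  have fg: "park_le f g" using g by (simp add: Up_def)
  have "Up g \<subseteq> Up f" using park_trans[OF fg] by (auto simp: Up_def)
  moreover have "f \<notin> Up g" using g park_antisym[of f g] f by (auto simp: Up_def)
  moreover have "f \<in> Up f" using f park_refl by (auto simp: Up_def)
  ultimately have "Up g \<subset> Up f" by blast
  then show ?thesis using finite_Up by (rule psubset_card_mono[rotated])
qed

function Mrec :: "pf \<Rightarrow> pf \<Rightarrow> int" where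
  "Mrec f h = (if is_pf f then Fb f h - (\<Sum>g \<in> Up f - {f}. Mrec g h) else 0)"
  by auto
termination
  by (relation "measure (\<lambda>(f, h). card (Up f))") (auto simp: Up_card_less)

declare Mrec.simps[simp del]

lemma Up_eq: "{g. is_pf g \<and> park_le f g} = Up f" by (simp add: Up_def)

lemma Mrec_sum: "is_pf f \<Longrightarrow> Fb f h = (\<Sum>g \<in> Up f. Mrec g h)"
proof -
  assume f: "is_pf f"
  have "f \<in> Up f" using f park_refl by (simp add: Up_def)
  then have "(\<Sum>g \<in> Up f. Mrec g h) = Mrec f h + (\<Sum>g \<in> Up f - {f}. Mrec g h)"
    using finite_Up by (simp add: sum.remove)
  also have "\<dots> = Fb f h" using f by (subst Mrec.simps) simp
  finally show ?thesis by simp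
qed

lemma Mb_eq: "Mb = Mrec"
proof -
  let ?S = "\<lambda>M. (\<forall>f. \<not> is_pf f \<longrightarrow> M f = (\<lambda>_. 0)) \<and>
      (\<forall>f. is_pf f \<longrightarrow> Fb f = (\<lambda>h. \<Sum>g \<in> {g. is_pf g \<and> park_le f g}. M g h))"
  have ex: "?S Mrec"
    by (auto simp: Up_eq Mrec_sum intro!: ext) (subst Mrec.simps, simp)
  have un: "M = Mrec" if "?S M" for M
  proof (rule ext)
    fix f show "M f = Mrec f"
    proof (cases "is_pf f")
      case False
      have "M f = (\<lambda>_. 0)" using that False by blast
      moreover have "Mrec f = (\<lambda>_. 0)" using False by (intro ext) (subst Mrec.simps, simp)
      ultimately show ?thesis by simp
    next
      case True
      show ?thesis
      proof (rule ext)
        fix h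
        show "M f h = Mrec f h"
        proof (rule moeb_unique[of "{f. is_pf f}" Up "\<lambda>g. M g h" "\<lambda>g. Mrec g h"])
          show "finite (Up g)" for g by (rule finite_Up)
          show "g \<in> Up g" if "g \<in> {f. is_pf f}" for g using that park_refl by (simp add: Up_def)
          show "g' \<in> {f. is_pf f} \<and> Up g' \<subseteq> Up g" if "g \<in> {f. is_pf f}" "g' \<in> Up g" for g g'
            using that Up_sub[of g' g] by (auto simp: Up_def)
          show "g' = g" if "g \<in> {f. is_pf f}" "g' \<in> Up g" "g \<in> Up g'" for g g'
            using that park_antisym by (auto simp: Up_def)
          show "(\<Sum>g' \<in> Up g. M g' h) = (\<Sum>g' \<in> Up g. Mrec g' h)" if "g \<in> {f. is_pf f}" for g
          proof -
            have "Fb g = (\<lambda>h. \<Sum>g' \<in> {g'. is_pf g' \<and> park_le g g'}. M g' h)"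
              using \<open>?S M\<close> that by blast
            then have "Fb g h = (\<Sum>g' \<in> Up g. M g' h)" by (simp add: Up_eq)
            then show ?thesis using Mrec_sum[of g h] that by simp
          qed
          show "f \<in> {f. is_pf f}" using True by simp
        qed
      qed
    qed
  qed
  show ?thesis unfolding Mb_def using ex un by (rule the_equality)
qed

lemma Fb_expand: "is_pf f \<Longrightarrow> Fb f h = (\<Sum>g \<in> Up f. Mb g h)"
  by (simp add: Mb_eq Mrec_sum)



lemma Delta_lin: "finite A \<Longrightarrow> Delta (\<lambda>q. \<Sum>a\<in>A. X a q) p = (\<Sum>a\<in>A. Delta (X a) p)"
proof -
  assume A: "finite A"
  obtain g h where p: "p = (g, h)" by (cases p) blast
  show ?thesis unfolding p Delta_def
    by (simp add: sum_distrib_right) (rule sum.swap)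
qed

lemma tensor_lin1: "tensor (\<lambda>q. \<Sum>a\<in>A. X a q) y p = (\<Sum>a\<in>A. tensor (X a) y p)"
  by (cases p) (simp add: tensor_def sum_distrib_right)

lemma tensor_lin2: "tensor y (\<lambda>q. \<Sum>a\<in>A. X a q) p = (\<Sum>a\<in>A. tensor y (X a) p)"
  by (cases p) (simp add: tensor_def sum_distrib_left)

lemma Delta_plus_lin: "finite A \<Longrightarrow> Delta_plus (\<lambda>q. \<Sum>a\<in>A. X a q) p = (\<Sum>a\<in>A. Delta_plus (X a) p)"
  by (simp add: Delta_plus_def Delta_lin tensor_lin1 tensor_lin2 sum_subtractf)

lemma Delta_Fb:
  assumes f: "is_pf f"
  shows "Delta (Fb f) (a, b) = int (card {i. i \<le> pdeg f \<and> lsplit_pf i f = a \<and> rsplit_pf i f = b})"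
proof -
  let ?S = "{f. is_pf f \<and> pdeg f = pdeg a + pdeg b}"
  let ?c = "\<lambda>f. int (card {i. i \<le> pdeg f \<and> lsplit_pf i f = a \<and> rsplit_pf i f = b})"
  have "Delta (Fb f) (a, b) = (\<Sum>f'\<in>?S. if f' = f then ?c f' else 0)"
    unfolding Delta_def Fb_def by (auto intro!: sum.cong)
  also have "\<dots> = (if f \<in> ?S then ?c f else 0)"
    using finite_P by (simp add: sum.delta)
  also have "\<dots> = ?c f"
  proof (cases "f \<in> ?S")
    case False
    have "{i. i \<le> pdeg f \<and> lsplit_pf i f = a \<and> rsplit_pf i f = b} = {}"
    proof (rule ccontr)
      assume "{i. i \<le> pdeg f \<and> lsplit_pf i f = a \<and> rsplit_pf i f = b} \<noteq> {}"
      then obtain i where i: "i \<le> pdeg f" "lsplit_pf i f = a" "rsplit_pf i f = b" by blast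
      then have "pdeg a + pdeg b = pdeg f" using split_pf[OF f i(1)] by auto
      then show False using False f by simp
    qed
    then show ?thesis using False by simp
  qed simp
  finally show ?thesis .
qed

lemma card_ind: "int (card {i. i \<le> (n::nat) \<and> Q i}) = (\<Sum>i\<in>{0..n}. if Q i then 1 else 0)"
proof -
  have "{i. i \<le> n \<and> Q i} = {i \<in> {0..n}. Q i}" by auto
  then have "int (card {i. i \<le> n \<and> Q i}) = (\<Sum>i\<in>{i \<in> {0..n}. Q i}. 1)" by simp
  also have "\<dots> = (\<Sum>i\<in>{0..n}. if Q i then 1 else 0)" by (rule sum.inter_filter) simp
  finally show ?thesis .
qed

lemma split_ends:
  assumes f: "is_pf f"
  shows "lsplit_pf 0 f = unit_pf" "rsplit_pf 0 f = f" "lsplit_pf (pdeg f) f = f" "rsplit_pf (pdeg f) f = unit_pf"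
proof -
  obtain s t where ft: "f = (s, t)" by fastforce
  have p: "is_perm (deg t) s" using f ft by (simp add: is_pf_def)
  have l: "length s = deg t" using p by (simp add: is_perm_def)
  show "lsplit_pf 0 f = unit_pf" "rsplit_pf 0 f = f" "lsplit_pf (pdeg f) f = f" "rsplit_pf (pdeg f) f = unit_pf"
    using ft std_perm_id[OF p] l
    by (simp_all add: lsplit_pf_def rsplit_pf_def unit_pf_def std_def lsplit0 rsplit0 lsplit_last rsplit_last pdeg_def)
qed

lemma Dplus_Fb:
  assumes f: "is_pf f" and n: "pdeg f = n" "0 < n"
  shows "Delta_plus (Fb f) (a, b) = (\<Sum>i\<in>{1..n-1}. if lsplit_pf i f = a \<and> rsplit_pf i f = b then 1 else 0)"
proof -
  let ?Q = "\<lambda>i. lsplit_pf i f = a \<and> rsplit_pf i f = b"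
  have fu: "f \<noteq> unit_pf" using n by (auto simp: unit_pf_def pdeg_def)
  have e: "{0..n} = insert 0 (insert n {1..n-1})" using n by auto
  have "Delta (Fb f) (a, b) = (\<Sum>i\<in>{0..n}. if ?Q i then 1 else 0)"
    using Delta_Fb[OF f] card_ind n by simp
  also have "\<dots> = (if ?Q 0 then 1 else 0) + (if ?Q n then 1 else 0) + (\<Sum>i\<in>{1..n-1}. if ?Q i then 1 else 0)"
    unfolding e using n by (simp add: sum.insert)
  finally have D: "Delta (Fb f) (a, b) = (if ?Q 0 then 1 else 0) + (if ?Q n then 1 else 0) + (\<Sum>i\<in>{1..n-1}. if ?Q i then 1 else 0)" .
  have Q0: "?Q 0 \<longleftrightarrow> a = unit_pf \<and> b = f" and Qn: "?Q n \<longleftrightarrow> a = f \<and> b = unit_pf"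
    using split_ends[OF f] n by auto
  show ?thesis unfolding Delta_plus_def D using Q0 Qn fu
    by (simp add: tensor_def Fb_def)
qed



lemma GD_sub: "is_pf g \<Longrightarrow> GD g \<subseteq> {1..pdeg g - 1}"
  by (auto simp: GD_def GDP_def is_pf_def is_perm_def pdeg_def)

lemma sum_R:
  assumes f: "is_pf f" and n: "pdeg f = n" "0 < n"
  shows "(\<Sum>g\<in>Up f. \<Sum>i\<in>GD g. tensor (Mb (lsplit_pf i g)) (Mb (rsplit_pf i g)) (a, b))
        = (\<Sum>i\<in>{1..n-1}. if lsplit_pf i f = a \<and> rsplit_pf i f = b then 1 else 0)"
proof -
  let ?I = "{1..n-1}"
  let ?T = "\<lambda>g i. Mb (lsplit_pf i g) a * Mb (rsplit_pf i g) b"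
  have "(\<Sum>g\<in>Up f. \<Sum>i\<in>GD g. tensor (Mb (lsplit_pf i g)) (Mb (rsplit_pf i g)) (a, b))
      = (\<Sum>g\<in>Up f. \<Sum>i\<in>?I. if i \<in> GD g then ?T g i else 0)"
  proof (rule sum.cong[OF refl])
    fix g assume g: "g \<in> Up f"
    have gp: "is_pf g" "pdeg g = n" using g n park_pdeg[of f g] by (auto simp: Up_def)
    have "{i \<in> ?I. i \<in> GD g} = GD g" using GD_sub[OF gp(1)] gp(2) by auto
    then have "(\<Sum>i\<in>GD g. ?T g i) = (\<Sum>i\<in>{i \<in> ?I. i \<in> GD g}. ?T g i)" by simp
    also have "\<dots> = (\<Sum>i\<in>?I. if i \<in> GD g then ?T g i else 0)" by (rule sum.inter_filter) simp
    finally show "(\<Sum>i\<in>GD g. tensor (Mb (lsplit_pf i g)) (Mb (rsplit_pf i g)) (a, b))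
      = (\<Sum>i\<in>?I. if i \<in> GD g then ?T g i else 0)" by (simp add: tensor_def)
  qed
  also have "\<dots> = (\<Sum>i\<in>?I. \<Sum>g\<in>Up f. if i \<in> GD g then ?T g i else 0)" by (rule sum.swap)
  also have "\<dots> = (\<Sum>i\<in>?I. if lsplit_pf i f = a \<and> rsplit_pf i f = b then 1 else 0)"
  proof (rule sum.cong[OF refl])
    fix i assume i: "i \<in> ?I"
    have i1: "1 \<le> i" "i < n" using i n by auto
    have "(\<Sum>g\<in>Up f. if i \<in> GD g then ?T g i else 0) = (\<Sum>g\<in>{g \<in> Up f. i \<in> GD g}. ?T g i)"
      using finite_Up by (rule sum.inter_filter[symmetric])
    also have "\<dots> = (\<Sum>q\<in>Up (lsplit_pf i f) \<times> Up (rsplit_pf i f). (\<lambda>(u, v). Mb u a * Mb v b) q)"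
      using sum.reindex_bij_betw[OF split_bij[OF f n(1) i1], of "\<lambda>(u, v). Mb u a * Mb v b"] by simp
    also have "\<dots> = (\<Sum>u\<in>Up (lsplit_pf i f). Mb u a) * (\<Sum>v\<in>Up (rsplit_pf i f). Mb v b)"
      by (simp add: sum_product sum.cartesian_product)
    also have "\<dots> = Fb (lsplit_pf i f) a * Fb (rsplit_pf i f) b"
      using split_pf[OF f, of i] i1 n by (simp add: Fb_expand)
    also have "\<dots> = (if lsplit_pf i f = a \<and> rsplit_pf i f = b then 1 else 0)"
      by (auto simp: Fb_def)
    finally show "(\<Sum>g\<in>Up f. if i \<in> GD g then ?T g i else 0) = (if lsplit_pf i f = a \<and> rsplit_pf i f = b then 1 else 0)" .
  qed
  finally show ?thesis .
qed

lemma sum_DM: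
  assumes f: "is_pf f"
  shows "(\<Sum>g\<in>Up f. Delta_plus (Mb g) p) = Delta_plus (Fb f) p"
proof -
  have "Fb f = (\<lambda>h. \<Sum>g\<in>Up f. Mb g h)" using f by (simp add: Fb_expand fun_eq_iff)
  then show ?thesis using Delta_plus_lin[OF finite_Up, of Mb f p] by simp
qed

theorem mainTheorem19:
  fixes f :: pf
  assumes "is_pf f" and "pdeg f > 0"
  shows "Delta_plus (Mb f) =
    (\<lambda>p. \<Sum>i \<in> GD f. tensor (Mb (lsplit_pf i f)) (Mb (rsplit_pf i f)) p)"
proof (rule ext)
  fix p :: "pf \<times> pf"
  obtain a b where p: "p = (a, b)" by (cases p) blast
  let ?P = "{g. is_pf g \<and> 0 < pdeg g}"
  have "Delta_plus (Mb f) (a, b) = (\<Sum>i \<in> GD f. tensor (Mb (lsplit_pf i f)) (Mb (rsplit_pf i f)) (a, b))"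
  proof (rule moeb_unique[of ?P Up "\<lambda>g. Delta_plus (Mb g) (a, b)"
        "\<lambda>g. \<Sum>i \<in> GD g. tensor (Mb (lsplit_pf i g)) (Mb (rsplit_pf i g)) (a, b)"])
    show "finite (Up g)" for g by (rule finite_Up)
    show "g \<in> Up g" if "g \<in> ?P" for g using that park_refl by (simp add: Up_def)
    show "g' \<in> ?P \<and> Up g' \<subseteq> Up g" if "g \<in> ?P" "g' \<in> Up g" for g g'
      using that Up_sub[of g' g] park_pdeg[of g g'] by (auto simp: Up_def)
    show "g' = g" if "g \<in> ?P" "g' \<in> Up g" "g \<in> Up g'" for g g'
      using that park_antisym[of g g'] by (auto simp: Up_def)
    show "(\<Sum>g' \<in> Up g. Delta_plus (Mb g') (a, b)) =
          (\<Sum>g' \<in> Up g. \<Sum>i \<in> GD g'. tensor (Mb (lsplit_pf i g')) (Mb (rsplit_pf i g')) (a, b))"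
      if "g \<in> ?P" for g
      using that sum_DM[of g "(a, b)"] Dplus_Fb[of g "pdeg g" a b] sum_R[of g "pdeg g" a b] by simp
    show "f \<in> ?P" using assms by simp
  qed
  then show "Delta_plus (Mb f) p = (\<Sum>i \<in> GD f. tensor (Mb (lsplit_pf i f)) (Mb (rsplit_pf i f)) p)"
    using p by simp
qed

end
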